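(* Let $M\ge K\ge 1$, $N\ge1$, $\sigma^2>0$, and let $\boldsymbol{H}_{\mathrm d}=[\boldsymbol h_{\mathrm d,1},\dots,\boldsymbol h_{\mathrm d,K}]\in\mathbb C^{M\times K}$, $\boldsymbol H_{\mathrm r}=[\boldsymbol h_{\mathrm r,1},\dots,\boldsymbol h_{\mathrm r,K}]\in\mathbb C^{N\times K}$ and $\boldsymbol G\in\mathbb C^{M\times N}$. Assume that $\boldsymbol H_{\mathrm d}$ has full column rank $K$ and that $$\sigma_{\max}(\boldsymbol G)\,\sigma_{\max}(\boldsymbol H_{\mathrm r})<\sigma_{\min}(\boldsymbol H_{\mathrm d}).$$ Then for arbitrary targets $r_1,\dots,r_K\ge 0$, problem (P1) with unlimited power budgets is feasible: there exist $\boldsymbol\phi\in\mathbb C^N$ with $|\phi_n|=1$ for all $n$ and $\boldsymbol q\in\mathbb R^K$, $\boldsymbol q>\boldsymbol 0$, such that $\widetilde\gamma_k(\boldsymbol\phi,\boldsymbol q)\ge r_k$ for all $k=1,\dots,K$.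
   Context: For $\boldsymbol\phi\in\mathbb C^N$ with unit-modulus entries, let $\boldsymbol\Phi=\mathrm{Diag}(\boldsymbol\phi)$ and define the effective channels $\boldsymbol h_k(\boldsymbol\phi)=\boldsymbol G\boldsymbol\Phi\boldsymbol h_{\mathrm r,k}+\boldsymbol h_{\mathrm d,k}$, $k=1,\dots,K$. For powers $\boldsymbol q=(q_1,\dots,q_K)\ge \boldsymbol 0$ set $\boldsymbol W_k(\boldsymbol\phi,\boldsymbol q)=\sigma^2\boldsymbol I_M+\sum_{i\ne k}q_i\boldsymbol h_i(\boldsymbol\phi)\boldsymbol h_i(\boldsymbol\phi)^H$ and define the (optimal linear receiver) SINR of user $k$ as $\widetilde\gamma_k(\boldsymbol\phi,\boldsymbol q)=q_k\,\boldsymbol h_k(\boldsymbol\phi)^H\boldsymbol W_k(\boldsymbol\phi,\boldsymbol q)^{-1}\boldsymbol h_k(\boldsymbol\phi)$. $\sigma_{\max}(\boldsymbol X)$ and $\sigma_{\min}(\boldsymbol X)$ denote the largest and smallest nonzero singular values of a matrix $\boldsymbol X$. Problem (P1) with unlimited power means: find $(\boldsymbol\phi,\boldsymbol q)$ with $|\phi_n|=1$ for all $n$, $\boldsymbol q\ge\boldsymbol 0$ (no upper bound), and $\widetilde\gamma_k(\boldsymbol\phi,\boldsymbol q)\ge r_k$ for all $k$. *)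

theory Defs
  imports "HOL-Analysis.Analysis"
begin

definition ctrans :: "complex^'n^'m \<Rightarrow> complex^'m^'n" where
  "ctrans A = (\<chi> i j. cnj (A $ j $ i))"

definition sing_vals :: "complex^'n^'m \<Rightarrow> real set" where
  "sing_vals A = {s. s > 0 \<and> (\<exists>v. v \<noteq> 0 \<and> (ctrans A ** A) *v v = (\<chi> i. complex_of_real (s^2) * v $ i))}"

text \<open>Largest / smallest nonzero singular value (convention: 0 for the zero matrix).\<close>
definition sigma_max :: "complex^'n^'m \<Rightarrow> real" where
  "sigma_max A = (if sing_vals A = {} then 0 else Max (sing_vals A))"

definition sigma_min :: "complex^'n^'m \<Rightarrow> real" where
  "sigma_min A = (if sing_vals A = {} then 0 else Min (sing_vals A))"

definition diag_mat :: "complex^'n \<Rightarrow> complex^'n^'n" where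
  "diag_mat v = (\<chi> i j. if i = j then v $ i else 0)"

definition col :: "'a::zero^'k^'m \<Rightarrow> 'k \<Rightarrow> 'a^'m" where
  "col A k = (\<chi> i. A $ i $ k)"

definition eff_chan ::
  "complex^'n^'m \<Rightarrow> complex^'k^'n \<Rightarrow> complex^'k^'m \<Rightarrow> complex^'n \<Rightarrow> 'k \<Rightarrow> complex^'m" where
  "eff_chan G Hr Hd phi k = (G ** diag_mat phi) *v col Hr k + col Hd k"

definition outer :: "complex^'m \<Rightarrow> complex^'m^'m" where
  "outer h = (\<chi> i j. h $ i * cnj (h $ j))"

definition herm_form :: "complex^'m \<Rightarrow> complex^'m^'m \<Rightarrow> complex^'m \<Rightarrow> complex" where
  "herm_form x A y = (\<Sum>i\<in>UNIV. cnj (x $ i) * (A *v y) $ i)"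

definition W_mat ::
  "real \<Rightarrow> complex^'n^'m \<Rightarrow> complex^'k^'n \<Rightarrow> complex^'k^'m \<Rightarrow> complex^'n \<Rightarrow> real^'k \<Rightarrow> 'k \<Rightarrow> complex^'m^'m" where
  "W_mat sigma2 G Hr Hd phi q k =
     mat (complex_of_real sigma2)
     + (\<Sum>i\<in>UNIV - {k}. (\<chi> a b. complex_of_real (q $ i) * outer (eff_chan G Hr Hd phi i) $ a $ b))"

text \<open>SINR of user k with the optimal linear (MMSE) receiver.\<close>
definition sinr ::
  "real \<Rightarrow> complex^'n^'m \<Rightarrow> complex^'k^'n \<Rightarrow> complex^'k^'m \<Rightarrow> complex^'n \<Rightarrow> real^'k \<Rightarrow> 'k \<Rightarrow> complex" where
  "sinr sigma2 G Hr Hd phi q k =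
     complex_of_real (q $ k) *
       herm_form (eff_chan G Hr Hd phi k) (matrix_inv (W_mat sigma2 G Hr Hd phi q k)) (eff_chan G Hr Hd phi k)"

end

theory Submission
  imports Defs
begin

lemma inner_cvec: "inner (x::complex^'n) y = Re (\<Sum>i\<in>UNIV. x$i * cnj (y$i))"
  by (simp add: inner_vec_def inner_complex_def Re_sum)

lemma mv_scaleR: "(A::complex^'n^'m) *v (c *\<^sub>R x) = c *\<^sub>R (A *v x)"
  by (simp add: vec_eq_iff matrix_vector_mult_def scaleR_sum_right)

lemma mv_linear: "linear ((*v) (A::complex^'n^'m))"
  by (rule linearI) (simp_all add: matrix_vector_right_distrib mv_scaleR)

lemma adjoint: "inner ((A::complex^'n^'m) *v x) y = inner x (ctrans A *v y)"
proof -
  have "(\<Sum>i\<in>UNIV. (A *v x)$i * cnj (y$i)) = (\<Sum>i\<in>UNIV. \<Sum>j\<in>UNIV. A$i$j * x$j * cnj (y$i))"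
    by (simp add: matrix_vector_mult_def sum_distrib_right)
  also have "\<dots> = (\<Sum>j\<in>UNIV. \<Sum>i\<in>UNIV. A$i$j * x$j * cnj (y$i))" by (rule sum.swap)
  also have "\<dots> = (\<Sum>j\<in>UNIV. x$j * cnj ((ctrans A *v y)$j))"
    by (simp add: matrix_vector_mult_def ctrans_def sum_distrib_left mult_ac)
  finally show ?thesis by (simp add: inner_cvec)
qed

lemma cont_q: "continuous_on S (\<lambda>w. (norm ((A::complex^'n^'m) *v w))^2)"
proof -
  have "bounded_linear ((*v) A)" using mv_linear linear_conv_bounded_linear by blast
  then have "continuous_on S ((*v) A)" by (simp add: linear_continuous_on)
  then show ?thesis by (intro continuous_intros)
qed

lemma BtoA: "(ctrans A ** A) *v v = ctrans A *v (A *v v)"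
  by (simp add: matrix_vector_mul_assoc)

lemma eig_scale: "(\<chi> i. complex_of_real (s^2) * v $ i) = (s^2) *\<^sub>R (v::complex^'n)"
  unfolding vec_eq_iff vector_scaleR_component by (simp add: scaleR_conv_of_real)

lemma arith1:
  fixes t lam a b D F :: real
  assumes "t > 0" "lam \<ge> 0" "lam * t \<le> 1" "F \<ge> 0" "D \<ge> 0"
    "lam + 2*t*a + t^2*F \<le> lam * (1 + 2*t*b + t^2*D)" "a = lam*b + D"
  shows "D \<le> 0"
proof -
  have "2*t*D + t^2*F \<le> lam*t^2*D" using assms(6,7) by (simp add: algebra_simps)
  moreover have "t^2*F \<ge> 0" using assms by simp
  ultimately have "2*t*D \<le> (lam*t)*(t*D)" by (simp add: power2_eq_square algebra_simps)
  also have "\<dots> \<le> 1 * (t*D)" using assms by (intro mult_right_mono) auto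
  finally have "t * D \<le> 0" by linarith
  then show ?thesis using assms(1) by (simp add: mult_le_0_iff)
qed

lemma eig_scale2: "(\<chi> i. (complex_of_real s)^2 * v $ i) = (s^2) *\<^sub>R (v::complex^'n)"
  using eig_scale[of s v] by simp

lemma normsq_add: "(norm (a + b::'a::real_inner))^2 = (norm a)^2 + 2 * inner a b + (norm b)^2"
  by (simp add: power2_norm_eq_inner inner_add inner_commute)

lemma AA_inner: "inner ((A::complex^'n^'m) *v x) (A *v y) = inner (ctrans A *v (A *v x)) y"
  by (metis adjoint inner_commute)

lemma q_scale_bound:
  fixes A :: "complex^'n^'m"
  assumes "\<And>u. norm u = 1 \<Longrightarrow> P ((norm (A *v u))^2)"
    and "\<And>c w. w \<noteq> 0 \<Longrightarrow> P c \<Longrightarrow> Q w ((norm w)^2 * c)"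
    and "Q 0 0"
  shows "Q w ((norm (A *v w))^2)"
proof (cases "w = 0")
  case True then show ?thesis using assms(3) by simp
next
  case False
  let ?u = "(1 / norm w) *\<^sub>R w"
  have "norm ?u = 1" using False by simp
  then have "P ((norm (A *v ?u))^2)" by (rule assms(1))
  moreover have "(norm w)^2 * (norm (A *v ?u))^2 = (norm (A *v w))^2"
    using False by (simp add: mv_scaleR power_mult_distrib field_simps)
  ultimately show ?thesis using assms(2)[OF False] by metis
qed

lemma eig_max:
  fixes A :: "complex^'n^'m"
  obtains lam v0 where "norm v0 = 1" "lam \<ge> 0" "\<And>w. (norm (A *v w))^2 \<le> lam * (norm w)^2"
    "ctrans A *v (A *v v0) = lam *\<^sub>R v0" "(norm (A *v v0))^2 = lam"
proof -
  let ?f = "\<lambda>w. (norm (A *v w))^2"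
  have ne: "sphere (0::complex^'n) 1 \<noteq> {}" by simp
  obtain v0 where v0: "v0 \<in> sphere 0 1" and mx: "\<forall>y\<in>sphere 0 1. ?f y \<le> ?f v0"
    using continuous_attains_sup[OF compact_sphere ne cont_q] by blast
  define lam where "lam = ?f v0"
  have n1: "norm v0 = 1" using v0 by simp
  have l0: "lam \<ge> 0" by (simp add: lam_def)
  have bnd: "?f w \<le> lam * (norm w)^2" for w
    by (rule q_scale_bound[where P="\<lambda>c. c \<le> lam" and Q="\<lambda>w c. c \<le> lam * (norm w)^2"])
       (use mx lam_def in \<open>auto simp: mult_left_mono mult.commute\<close>)
  define d where "d = ctrans A *v (A *v v0) - lam *\<^sub>R v0"
  define t where "t = 1 / (lam + 1)"
  have t0: "t > 0" using l0 by (simp add: t_def)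
  have "?f (v0 + t *\<^sub>R d) \<le> lam * (norm (v0 + t *\<^sub>R d))^2" by (rule bnd)
  moreover have "?f (v0 + t *\<^sub>R d) = lam + 2 * t * inner (ctrans A *v (A *v v0)) d + t^2 * ?f d"
    unfolding matrix_vector_right_distrib mv_scaleR normsq_add
    by (simp add: AA_inner lam_def power_mult_distrib)
  moreover have "(norm (v0 + t *\<^sub>R d))^2 = 1 + 2 * t * inner v0 d + t^2 * (norm d)^2"
    unfolding normsq_add by (simp add: n1 power_mult_distrib)
  moreover have "inner (ctrans A *v (A *v v0)) d = lam * inner v0 d + (norm d)^2"
  proof -
    have "ctrans A *v (A *v v0) = d + lam *\<^sub>R v0" by (simp add: d_def)
    then show ?thesis by (simp add: inner_add_left power2_norm_eq_inner)
  qed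
  moreover have "lam * t \<le> 1" using l0 by (simp add: t_def)
  ultimately have "(norm d)^2 \<le> 0"
    by (intro arith1[where t=t and lam=lam and a="inner (ctrans A *v (A *v v0)) d" and b="inner v0 d" and D="(norm d)^2" and F="?f d"]) (use t0 l0 in auto)
  then have "d = 0" by simp
  then have "ctrans A *v (A *v v0) = lam *\<^sub>R v0" by (simp add: d_def)
  then show ?thesis using that n1 l0 bnd lam_def by blast
qed


lemma arith2:
  fixes t mu lam a b D F :: real
  assumes "t > 0" "mu \<ge> 0" "lam * t \<le> 1" "F \<le> lam * D" "D \<ge> 0"
    "mu * (1 + 2*(-t)*b + (-t)^2*D) \<le> mu + 2*(-t)*a + (-t)^2*F" "a = mu*b + D"
  shows "D \<le> 0"
proof -
  have "2*t*D \<le> t^2*F - mu*t^2*D" using assms(6,7) by (simp add: algebra_simps)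
  moreover have "mu*t^2*D \<ge> 0" using assms by simp
  moreover have "t^2*F \<le> t^2*(lam*D)" using assms by (intro mult_left_mono) auto
  ultimately have "2*t*D \<le> (lam*t)*(t*D)" by (simp add: power2_eq_square algebra_simps)
  also have "\<dots> \<le> 1 * (t*D)" using assms by (intro mult_right_mono) auto
  finally have "t * D \<le> 0" by linarith
  then show ?thesis using assms(1) by (simp add: mult_le_0_iff)
qed

lemma eig_min:
  fixes A :: "complex^'n^'m"
  obtains mu v0 where "norm v0 = 1" "mu \<ge> 0" "\<And>w. mu * (norm w)^2 \<le> (norm (A *v w))^2"
    "ctrans A *v (A *v v0) = mu *\<^sub>R v0" "(norm (A *v v0))^2 = mu"
proof -
  let ?f = "\<lambda>w. (norm (A *v w))^2"
  obtain lam u where l0: "lam \<ge> 0" and lb: "\<And>w. ?f w \<le> lam * (norm w)^2"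
    using eig_max[of A] by metis
  have ne: "sphere (0::complex^'n) 1 \<noteq> {}" by simp
  obtain v0 where v0: "v0 \<in> sphere 0 1" and mn: "\<forall>y\<in>sphere 0 1. ?f v0 \<le> ?f y"
    using continuous_attains_inf[OF compact_sphere ne cont_q] by blast
  define mu where "mu = ?f v0"
  have n1: "norm v0 = 1" using v0 by simp
  have m0: "mu \<ge> 0" by (simp add: mu_def)
  have bnd: "mu * (norm w)^2 \<le> ?f w" for w
    by (rule q_scale_bound[where P="\<lambda>c. mu \<le> c" and Q="\<lambda>w c. mu * (norm w)^2 \<le> c"])
       (use mn mu_def in \<open>auto simp: mult_left_mono mult.commute\<close>)
  define d where "d = ctrans A *v (A *v v0) - mu *\<^sub>R v0"
  define t where "t = 1 / (lam + 1)"
  have t0: "t > 0" using l0 by (simp add: t_def)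
  have "mu * (norm (v0 + (-t) *\<^sub>R d))^2 \<le> ?f (v0 + (-t) *\<^sub>R d)" by (rule bnd)
  moreover have "?f (v0 + (-t) *\<^sub>R d) = mu + 2 * (-t) * inner (ctrans A *v (A *v v0)) d + (-t)^2 * ?f d"
    unfolding matrix_vector_right_distrib mv_scaleR normsq_add
    by (simp add: AA_inner mu_def power_mult_distrib)
  moreover have "(norm (v0 + (-t) *\<^sub>R d))^2 = 1 + 2 * (-t) * inner v0 d + (-t)^2 * (norm d)^2"
    unfolding normsq_add by (simp add: n1 power_mult_distrib)
  moreover have "inner (ctrans A *v (A *v v0)) d = mu * inner v0 d + (norm d)^2"
  proof -
    have "ctrans A *v (A *v v0) = d + mu *\<^sub>R v0" by (simp add: d_def)
    then show ?thesis by (simp add: inner_add_left power2_norm_eq_inner)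
  qed
  moreover have "lam * t \<le> 1" using l0 by (simp add: t_def)
  ultimately have "(norm d)^2 \<le> 0"
    by (intro arith2[where t=t and mu=mu and lam=lam and a="inner (ctrans A *v (A *v v0)) d" and b="inner v0 d" and D="(norm d)^2" and F="?f d"])
       (use t0 m0 lb in auto)
  then have "d = 0" by simp
  then have "ctrans A *v (A *v v0) = mu *\<^sub>R v0" by (simp add: d_def)
  then show ?thesis using that n1 m0 bnd mu_def by blast
qed

lemma sv_finite: "finite (sing_vals (A::complex^'n^'m))"
proof -
  let ?S = "sing_vals A"
  have ex: "\<exists>v. v \<noteq> 0 \<and> ctrans A *v (A *v v) = (s^2) *\<^sub>R v" if "s \<in> ?S" for s
    using that unfolding sing_vals_def by (auto simp: BtoA eig_scale2)
  define V where "V s = (SOME v. v \<noteq> 0 \<and> ctrans A *v (A *v v) = (s^2) *\<^sub>R v)" for s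
  have V: "V s \<noteq> 0 \<and> ctrans A *v (A *v V s) = (s^2) *\<^sub>R V s" if "s \<in> ?S" for s
    unfolding V_def using someI_ex[OF ex[OF that]] .
  have pos: "s > 0" if "s \<in> ?S" for s using that by (simp add: sing_vals_def)
  have orth: "inner (V s) (V s') = 0" if "s \<in> ?S" "s' \<in> ?S" "s \<noteq> s'" for s s'
  proof -
    have "s^2 * inner (V s) (V s') = inner (ctrans A *v (A *v V s)) (V s')"
      using V[OF that(1)] by simp
    also have "\<dots> = inner (A *v V s) (A *v V s')" by (simp add: AA_inner)
    also have "\<dots> = inner (ctrans A *v (A *v V s')) (V s)" by (simp add: AA_inner inner_commute)
    also have "\<dots> = s'^2 * inner (V s) (V s')" using V[OF that(2)] by (simp add: inner_commute)
    finally have "(s^2 - s'^2) * inner (V s) (V s') = 0" by (simp add: algebra_simps)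
    moreover have "s^2 \<noteq> s'^2" using pos[OF that(1)] pos[OF that(2)] that(3)
      by (metis less_eq_real_def power2_eq_iff_nonneg)
    ultimately show ?thesis by simp
  qed
  have inj: "inj_on V ?S"
  proof (rule inj_onI, rule ccontr)
    fix s s' assume "s \<in> ?S" "s' \<in> ?S" "V s = V s'" "s \<noteq> s'"
    then have "inner (V s) (V s) = 0" using orth by metis
    then show False using V \<open>s \<in> ?S\<close> by simp
  qed
  have "pairwise orthogonal (V ` ?S)"
    unfolding pairwise_def orthogonal_def using orth by auto
  moreover have "0 \<notin> V ` ?S" using V by auto
  ultimately have "independent (V ` ?S)" by (rule pairwise_orthogonal_independent)
  then have "finite (V ` ?S)" by (rule independent_imp_finite)
  then show ?thesis using inj finite_imageD by blast
qed

lemma sigma_max_nonneg: "sigma_max (A::complex^'n^'m) \<ge> 0"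
proof (cases "sing_vals A = {}")
  case False
  then obtain s where "s \<in> sing_vals A" by blast
  moreover then have "s > 0" by (simp add: sing_vals_def)
  ultimately show ?thesis using sv_finite[of A] False
    by (simp add: sigma_max_def) (meson Max_ge less_eq_real_def order_trans)
qed (simp add: sigma_max_def)

lemma sqrt_in_sv:
  fixes A :: "complex^'n^'m"
  assumes "norm v0 = 1" "lam > 0" "ctrans A *v (A *v v0) = lam *\<^sub>R v0"
  shows "sqrt lam \<in> sing_vals A"
proof -
  have "(sqrt lam)^2 = lam" using assms by simp
  moreover have "v0 \<noteq> 0" using assms by auto
  ultimately show ?thesis unfolding sing_vals_def using assms by (auto simp: BtoA eig_scale2)
qed

lemma sv_max: "norm ((A::complex^'n^'m) *v w) \<le> sigma_max A * norm w"
proof -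
  obtain lam v0 where n1: "norm v0 = 1" and l0: "lam \<ge> 0" and b: "(norm (A *v w))^2 \<le> lam * (norm w)^2"
    and e: "ctrans A *v (A *v v0) = lam *\<^sub>R v0"
    using eig_max[of A] by metis
  show ?thesis
  proof (cases "lam = 0")
    case True
    then have "A *v w = 0" using b by simp
    then show ?thesis using sigma_max_nonneg[of A] by simp
  next
    case False
    then have "sqrt lam \<in> sing_vals A" using sqrt_in_sv[OF n1 _ e] l0 by simp
    then have sm: "sqrt lam \<le> sigma_max A"
      using sv_finite[of A] by (auto simp: sigma_max_def)
    have "norm (A *v w) \<le> sqrt (lam * (norm w)^2)" using b by (simp add: real_le_rsqrt)
    also have "\<dots> = sqrt lam * norm w" by (simp add: real_sqrt_mult)
    also have "\<dots> \<le> sigma_max A * norm w" using sm by (simp add: mult_right_mono)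
    finally show ?thesis .
  qed
qed

lemma sv_min:
  assumes inj: "\<And>v. (A::complex^'n^'m) *v v = 0 \<Longrightarrow> v = 0"
  shows "sigma_min A * norm w \<le> norm (A *v w)"
proof -
  obtain mu v0 where n1: "norm v0 = 1" and m0: "mu \<ge> 0" and b: "mu * (norm w)^2 \<le> (norm (A *v w))^2"
    and e: "ctrans A *v (A *v v0) = mu *\<^sub>R v0" and f: "(norm (A *v v0))^2 = mu"
    using eig_min[of A] by metis
  have "v0 \<noteq> 0" using n1 by auto
  then have "A *v v0 \<noteq> 0" using inj by blast
  then have "mu > 0" using f by auto
  then have "sqrt mu \<in> sing_vals A" using sqrt_in_sv[OF n1 _ e] by simp
  then have sm: "sigma_min A \<le> sqrt mu"
    using sv_finite[of A] by (auto simp: sigma_min_def)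
  have "sigma_min A * norm w \<le> sqrt mu * norm w" using sm by (simp add: mult_right_mono)
  also have "\<dots> = sqrt (mu * (norm w)^2)" by (simp add: real_sqrt_mult)
  also have "\<dots> \<le> norm (A *v w)" using b by (simp add: real_le_lsqrt)
  finally show ?thesis .
qed


lemma core:
  fixes h :: "'k::finite \<Rightarrow> complex^'m::finite" and Wm :: "complex^'m^'m" and l y :: "complex^'m"
    and q :: "'k \<Rightarrow> real"
  assumes Wy: "\<And>a. (Wm *v y)$a = of_real s2 * y$a + (\<Sum>i\<in>UNIV-{k}. of_real (q i) * (\<Sum>b\<in>UNIV. cnj (h i $ b) * y$b) * h i $ a)"
    and l: "\<And>i. (\<Sum>a\<in>UNIV. l$a * h i $ a) = (if i = k then 1 else 0)"
    and q0: "\<And>i. q i \<ge> 0"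
  shows "Wm *v y = h k \<Longrightarrow> s2 * inner y (\<chi> a. cnj (l$a)) = 1"
    and "Re (\<Sum>a\<in>UNIV. cnj ((Wm *v y) $ a) * y$a) \<ge> s2 * (norm y)^2"
proof -
  let ?c = "\<lambda>i. (\<Sum>b\<in>UNIV. cnj (h i $ b) * y$b)"
  have "(\<Sum>a\<in>UNIV. l$a * (Wm *v y)$a) = of_real s2 * (\<Sum>a\<in>UNIV. l$a * y$a)
      + (\<Sum>i\<in>UNIV-{k}. of_real (q i) * ?c i * (\<Sum>a\<in>UNIV. l$a * h i $ a))"
    unfolding Wy by (simp add: distrib_left sum.distrib sum_distrib_left sum_distrib_right mult_ac sum.swap[of _ "UNIV-{k}"])
       (rule sum.cong[OF refl], rule sum.swap)
  also have "(\<Sum>i\<in>UNIV-{k}. of_real (q i) * ?c i * (\<Sum>a\<in>UNIV. l$a * h i $ a)) = 0"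
    by (rule sum.neutral) (simp add: l)
  finally have "Wm *v y = h k \<Longrightarrow> of_real s2 * (\<Sum>a\<in>UNIV. l$a * y$a) = 1"
    using l[of k] by simp
  then have "Wm *v y = h k \<Longrightarrow> Re (of_real s2 * (\<Sum>a\<in>UNIV. l$a * y$a)) = 1" by simp
  then show "Wm *v y = h k \<Longrightarrow> s2 * inner y (\<chi> a. cnj (l$a)) = 1"
    by (simp add: inner_cvec mult.commute Re_sum)
  have "(\<Sum>a\<in>UNIV. cnj ((Wm *v y) $ a) * y$a) = of_real s2 * (\<Sum>a\<in>UNIV. cnj (y$a) * y$a)
      + (\<Sum>i\<in>UNIV-{k}. of_real (q i) * (cnj (?c i) * ?c i))"
    unfolding Wy by (simp add: distrib_right distrib_left sum.distrib sum_distrib_left sum_distrib_right mult_ac sum.swap[of _ "UNIV-{k}"])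
       (rule sum.cong[OF refl], rule sum.swap)
  then have "Re (\<Sum>a\<in>UNIV. cnj ((Wm *v y) $ a) * y$a) = s2 * Re (\<Sum>a\<in>UNIV. cnj (y$a) * y$a)
      + (\<Sum>i\<in>UNIV-{k}. q i * Re (cnj (?c i) * ?c i))"
    by (simp add: Re_sum)
  moreover have "(\<Sum>i\<in>UNIV-{k}. q i * Re (cnj (?c i) * ?c i)) \<ge> 0"
  proof -
    have cz: "\<And>z::complex. Re (cnj z * z) = (cmod z)^2"
      by (metis Re_complex_of_real complex_norm_square mult.commute)
    show ?thesis using q0 by (intro sum_nonneg mult_nonneg_nonneg) (simp_all only: cz zero_le_power2)
  qed
  moreover have "Re (\<Sum>a\<in>UNIV. cnj (y$a) * y$a) = (norm y)^2"
    by (simp add: power2_norm_eq_inner inner_cvec mult.commute)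
  ultimately show "Re (\<Sum>a\<in>UNIV. cnj ((Wm *v y) $ a) * y$a) \<ge> s2 * (norm y)^2" by simp
qed


lemma rank_inj:
  fixes A :: "complex^'k::finite^'m::finite"
  assumes "rank A = CARD('k)"
  shows "\<And>v. A *v v = 0 \<Longrightarrow> v = 0"
proof -
  have "vec.dim (rows A) = vec.dim (UNIV :: (complex^'k) set)"
    using assms by (metis row_rank_def_gen vec_dim_card)
  then have "vec.span (rows A) = UNIV"
    by (metis vec.dim_eq_full vec.dim_UNIV vec.dimension_def)
  then have "\<exists>B. B ** A = mat 1" by (simp add: matrix_left_invertible_span_rows_gen)
  then show "\<And>v. A *v v = 0 \<Longrightarrow> v = 0" by (simp add: matrix_left_invertible_ker)
qed

lemma Wcomp: "W_mat s2 G Hr Hd phi q k $ a $ b = (if a = b then of_real s2 else 0)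
   + (\<Sum>i\<in>UNIV-{k}. of_real (q$i) * (eff_chan G Hr Hd phi i $ a * cnj (eff_chan G Hr Hd phi i $ b)))"
  by (simp add: W_mat_def mat_def outer_def)

lemma Wmv: "(W_mat s2 G Hr Hd phi q k *v y) $ a = of_real s2 * y$a
   + (\<Sum>i\<in>UNIV-{k}. of_real (q$i) * (\<Sum>b\<in>UNIV. cnj (eff_chan G Hr Hd phi i $ b) * y$b) * eff_chan G Hr Hd phi i $ a)"
proof -
  have "(W_mat s2 G Hr Hd phi q k *v y) $ a = (\<Sum>b\<in>UNIV. (if a = b then of_real s2 * y$b else 0)
     + (\<Sum>i\<in>UNIV-{k}. of_real (q$i) * (eff_chan G Hr Hd phi i $ a * cnj (eff_chan G Hr Hd phi i $ b))) * y$b)"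
    unfolding matrix_vector_mult_def vec_lambda_beta by (rule sum.cong[OF refl]) (simp add: Wcomp distrib_right)
  also have "\<dots> = of_real s2 * y$a
   + (\<Sum>i\<in>UNIV-{k}. of_real (q$i) * (\<Sum>b\<in>UNIV. cnj (eff_chan G Hr Hd phi i $ b) * y$b) * eff_chan G Hr Hd phi i $ a)"
    by (simp add: sum.distrib sum_distrib_left sum_distrib_right mult_ac sum.swap[of _ "UNIV-{k}"])
  finally show ?thesis .
qed

lemma diag1: "diag_mat (\<chi> n. 1) = mat 1"
  by (simp add: diag_mat_def mat_def vec_eq_iff)

lemma hcol: "eff_chan G Hr Hd (\<chi> n. 1) j $ a = (G ** Hr + Hd) $ a $ j"
  unfolding eff_chan_def diag1 matrix_mul_rid
  by (simp add: matrix_matrix_mult_def matrix_vector_mult_def col_def)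


lemma arith3:
  fixes s r Q Y U R :: real
  assumes "s > 0" "r \<ge> 0" "Q \<ge> r * s * U^2" "s * (Y * U) \<ge> 1" "Y \<ge> 0" "U \<ge> 0" "R \<ge> Q * (s * Y^2)"
  shows "R \<ge> r"
proof -
  have "Q * (s * Y^2) \<ge> (r * s * U^2) * (s * Y^2)" using assms by (intro mult_right_mono) auto
  moreover have "(r * s * U^2) * (s * Y^2) = r * (s * (Y * U))^2" by (simp add: power2_eq_square)
  moreover have "(s * (Y * U))^2 \<ge> 1" using assms(4) by (metis one_le_power)
  moreover have "r * (s * (Y * U))^2 \<ge> r * 1" using assms calculation(3) by (intro mult_left_mono) auto
  ultimately show ?thesis using assms(7) by linarith
qed

theorem lemma1:
  fixes G :: "complex^'n::finite^'m::finite"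
    and Hr :: "complex^'k::finite^'n"
    and Hd :: "complex^'k^'m"
    and sigma2 :: real
  assumes "CARD('k) \<le> CARD('m)"
    and "sigma2 > 0"
    and "rank Hd = CARD('k)"
    and "sigma_max G * sigma_max Hr < sigma_min Hd"
  shows "\<forall>r :: real^'k. (\<forall>k. r $ k \<ge> 0) \<longrightarrow>
           (\<exists>phi :: complex^'n. \<exists>q :: real^'k.
              (\<forall>n. cmod (phi $ n) = 1) \<and> (\<forall>k. q $ k > 0) \<and>
              (\<forall>k. Re (sinr sigma2 G Hr Hd phi q k) \<ge> r $ k))"
proof (intro allI impI)
  fix r :: "real^'k"
  assume r: "\<forall>k. r $ k \<ge> 0"
  define phi :: "complex^'n" where "phi = (\<chi> n. 1)"
  define H where "H = G ** Hr + Hd"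
  have hH: "\<And>j a. eff_chan G Hr Hd phi j $ a = H $ a $ j" unfolding phi_def H_def by (rule hcol)
  have Hdinj: "\<And>v. Hd *v v = 0 \<Longrightarrow> v = 0" by (rule rank_inj[OF assms(3)])
  have Hinj: "c = 0" if "H *v c = 0" for c
  proof -
    have "G *v (Hr *v c) + Hd *v c = 0" using that
      by (simp add: H_def matrix_vector_mult_add_rdistrib matrix_vector_mul_assoc)
    then have "Hd *v c = - (G *v (Hr *v c))" by (simp add: eq_neg_iff_add_eq_0 add.commute)
    then have e: "norm (Hd *v c) = norm (G *v (Hr *v c))" by simp
    have "sigma_min Hd * norm c \<le> norm (Hd *v c)" by (rule sv_min[OF Hdinj])
    also have "\<dots> \<le> sigma_max G * norm (Hr *v c)" unfolding e by (rule sv_max)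
    also have "\<dots> \<le> sigma_max G * (sigma_max Hr * norm c)"
      by (intro mult_left_mono sv_max sigma_max_nonneg)
    finally have "(sigma_min Hd - sigma_max G * sigma_max Hr) * norm c \<le> 0"
      by (simp add: algebra_simps)
    then have "norm c \<le> 0" using assms(4) by (simp add: mult_le_0_iff)
    then show ?thesis by simp
  qed
  obtain L where L: "L ** H = mat 1" using Hinj matrix_left_invertible_ker by blast
  have Lh: "(\<Sum>a\<in>UNIV. (\<chi> a. L$k$a) $ a * eff_chan G Hr Hd phi i $ a) = (if i = k then 1 else 0)" for k i
  proof -
    have "(L ** H) $ k $ i = (if i = k then 1 else 0)" using L by (simp add: mat_def)
    then show ?thesis by (simp add: hH matrix_matrix_mult_def)
  qed
  define u where "u k = (\<chi> a. cnj ((\<chi> a. L$k$a) $ a))" for k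
  define q where "q = (\<chi> k. max 1 (r$k * sigma2 * (norm (u k))^2))"
  have q0: "\<And>i. q $ i \<ge> 0" by (simp add: q_def)
  show "\<exists>phi :: complex^'n. \<exists>q :: real^'k.
              (\<forall>n. cmod (phi $ n) = 1) \<and> (\<forall>k. q $ k > 0) \<and>
              (\<forall>k. Re (sinr sigma2 G Hr Hd phi q k) \<ge> r $ k)"
  proof (intro exI[of _ phi] exI[of _ q] conjI allI)
    show "cmod (phi $ n) = 1" for n by (simp add: phi_def)
    show "q $ k > 0" for k by (simp add: q_def less_max_iff_disj)
    fix k
    let ?W = "W_mat sigma2 G Hr Hd phi q k"
    let ?h = "eff_chan G Hr Hd phi"
    note cr = core[where q = "\<lambda>i. q $ i", OF Wmv[of sigma2 G Hr Hd phi q k] Lh q0]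
    have Winj: "x = 0" if "?W *v x = 0" for x
    proof -
      have "sigma2 * (norm x)^2 \<le> 0" using cr(2)[of x] that by simp
      then show ?thesis using assms(2) by (simp add: mult_le_0_iff)
    qed
    then have "\<exists>B. B ** ?W = mat 1" using matrix_left_invertible_ker by blast
    then have "invertible ?W" by (simp add: invertible_left_inverse)
    then have WI: "?W ** matrix_inv ?W = mat 1"
      unfolding invertible_def matrix_inv_def by (rule someI_ex[THEN conjunct1])
    define y where "y = matrix_inv ?W *v ?h k"
    have Wy: "?W *v y = ?h k" by (simp add: y_def matrix_vector_mul_assoc WI)
    have c1: "sigma2 * inner y (u k) = 1" using cr(1)[OF Wy] by (simp add: u_def)
    have c2: "Re (\<Sum>a\<in>UNIV. cnj (?h k $ a) * y$a) \<ge> sigma2 * (norm y)^2"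
      using cr(2)[of y] Wy by simp
    have "sigma2 * inner y (u k) \<le> sigma2 * (norm y * norm (u k))"
      using assms(2) by (intro mult_left_mono norm_cauchy_schwarz) auto
    then have i1: "1 \<le> sigma2 * (norm y * norm (u k))" using c1 by simp
    have e: "Re (sinr sigma2 G Hr Hd phi q k) = q$k * Re (\<Sum>a\<in>UNIV. cnj (?h k $ a) * y$a)"
      by (simp add: sinr_def herm_form_def y_def)
    have i2: "q$k \<ge> r$k * sigma2 * (norm (u k))^2" by (simp add: q_def)
    have i3: "Re (sinr sigma2 G Hr Hd phi q k) \<ge> q$k * (sigma2 * (norm y)^2)"
      unfolding e by (rule mult_left_mono[OF c2 q0])
    show "Re (sinr sigma2 G Hr Hd phi q k) \<ge> r $ k"
      by (rule arith3[where s=sigma2 and r="r$k" and Q="q$k" and Y="norm y" and U="norm (u k)", OF assms(2) _ i2 i1 _ _ i3])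
         (use r in auto)
  qed
qed

end
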